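(* Let $G_8$ be the graph obtained by identifying one vertex of a $4$-cycle with one vertex of another (disjoint) $4$-cycle; i.e., $G_8$ has vertices $v_1,\ldots,v_7$ and edges $v_1v_2, v_2v_3, v_3v_7, v_7v_1, v_3v_4, v_4v_5, v_5v_6, v_6v_3$. Then $G_8$ is a partial cube that is not $\Theta$-graceful, i.e., $G_8$ admits no $\Theta$-graceful labeling.
   Context: A subgraph $H$ of a graph $G$ is isometric if $d_H(u,v)=d_G(u,v)$ for all vertices $u,v$ of $H$, where $d$ is shortest-path distance. A partial cube is a graph isomorphic to an isometric subgraph of some hypercube. The Djoković–Winkler relation $\Theta$ on the edges of $G$: edges $xy$ and $uv$ satisfy $xy\,\Theta\,uv$ iff $d(x,u)+d(y,v)\neq d(x,v)+d(y,u)$. On a partial cube $\Theta$ is an equivalence relation; its classes are called $\Theta$-classes. For a partial cube $G$ on $n$ vertices, a bijection $f:V(G)\to\{0,1,\ldots,n-1\}$ is a $\Theta$-graceful labeling if, labeling each edge $xy$ by $|f(x)-f(y)|$, all edges in the same $\Theta$-class receive the same label and distinct $\Theta$-classes receive distinct labels. A partial cube admitting such a labeling is called $\Theta$-graceful. *)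

theory Defs
  imports Main
begin

definition is_graph :: "'a set \<Rightarrow> ('a \<Rightarrow> 'a \<Rightarrow> bool) \<Rightarrow> bool" where
  "is_graph V adj \<longleftrightarrow> (\<forall>x y. adj x y \<longrightarrow> x \<in> V \<and> y \<in> V \<and> x \<noteq> y \<and> adj y x)"

definition is_walk :: "('a \<Rightarrow> 'a \<Rightarrow> bool) \<Rightarrow> 'a list \<Rightarrow> bool" where
  "is_walk adj p \<longleftrightarrow> p \<noteq> [] \<and> (\<forall>i. Suc i < length p \<longrightarrow> adj (p ! i) (p ! Suc i))"

definition gdist :: "('a \<Rightarrow> 'a \<Rightarrow> bool) \<Rightarrow> 'a \<Rightarrow> 'a \<Rightarrow> nat" where
  "gdist adj x y = (LEAST k. \<exists>p. is_walk adj p \<and> length p = Suc k \<and> hd p = x \<and> last p = y)"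

definition hypercube_V :: "nat \<Rightarrow> nat set set" where
  "hypercube_V n = Pow {..<n}"

definition hypercube_adj :: "nat \<Rightarrow> nat set \<Rightarrow> nat set \<Rightarrow> bool" where
  "hypercube_adj n S T \<longleftrightarrow> S \<in> hypercube_V n \<and> T \<in> hypercube_V n \<and> card ((S - T) \<union> (T - S)) = 1"

text \<open>Partial cube: isomorphic (via f) to an isometric subgraph H of some hypercube,
where H has vertex set f ` V and edges the images of edges of G.\<close>
definition partial_cube :: "'a set \<Rightarrow> ('a \<Rightarrow> 'a \<Rightarrow> bool) \<Rightarrow> bool" where
  "partial_cube V adj \<longleftrightarrow> is_graph V adj \<and>
     (\<exists>n (f :: 'a \<Rightarrow> nat set).
        inj_on f V \<and> f ` V \<subseteq> hypercube_V n \<and>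
        (\<forall>x y. adj x y \<longrightarrow> hypercube_adj n (f x) (f y)) \<and>
        (\<forall>u\<in>V. \<forall>v\<in>V. gdist adj u v = gdist (hypercube_adj n) (f u) (f v)))"

definition Theta :: "('a \<Rightarrow> 'a \<Rightarrow> bool) \<Rightarrow> 'a \<Rightarrow> 'a \<Rightarrow> 'a \<Rightarrow> 'a \<Rightarrow> bool" where
  "Theta adj x y u v \<longleftrightarrow>
     gdist adj x u + gdist adj y v \<noteq> gdist adj x v + gdist adj y u"

definition theta_graceful_labeling :: "'a set \<Rightarrow> ('a \<Rightarrow> 'a \<Rightarrow> bool) \<Rightarrow> ('a \<Rightarrow> nat) \<Rightarrow> bool" where
  "theta_graceful_labeling V adj f \<longleftrightarrow> bij_betw f V {..<card V} \<and>
     (\<forall>x y u v. adj x y \<longrightarrow> adj u v \<longrightarrow>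
        (Theta adj x y u v \<longleftrightarrow> \<bar>int (f x) - int (f y)\<bar> = \<bar>int (f u) - int (f v)\<bar>))"

definition theta_graceful :: "'a set \<Rightarrow> ('a \<Rightarrow> 'a \<Rightarrow> bool) \<Rightarrow> bool" where
  "theta_graceful V adj \<longleftrightarrow> partial_cube V adj \<and> (\<exists>f. theta_graceful_labeling V adj f)"

definition G8_V :: "nat set" where
  "G8_V = {1,2,3,4,5,6,7}"

definition G8_E :: "(nat \<times> nat) set" where
  "G8_E = {(1,2),(2,3),(3,7),(7,1),(3,4),(4,5),(5,6),(6,3)}"

definition G8_adj :: "nat \<Rightarrow> nat \<Rightarrow> bool" where
  "G8_adj x y \<longleftrightarrow> (x, y) \<in> G8_E \<or> (y, x) \<in> G8_E"

end

theory Submission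
  imports Defs
begin

lemma walk_tail:
  assumes "is_walk adj (a # q)" "q \<noteq> []"
  shows "is_walk adj q \<and> adj a (hd q)"
proof -
  have "adj ((a#q) ! 0) ((a#q) ! Suc 0)" using assms unfolding is_walk_def by auto
  hence "adj a (hd q)" using assms(2) by (cases q) auto
  moreover have "is_walk adj q" unfolding is_walk_def
  proof (intro conjI allI impI)
    show "q \<noteq> []" by fact
    fix i assume "Suc i < length q"
    hence "adj ((a#q) ! Suc i) ((a#q) ! Suc (Suc i))" using assms(1) unfolding is_walk_def by auto
    thus "adj (q ! i) (q ! Suc i)" by simp
  qed
  ultimately show ?thesis by simp
qed

lemma walk_cons:
  assumes "is_walk adj q" "adj a (hd q)"
  shows "is_walk adj (a # q)"
  unfolding is_walk_def
proof (intro conjI allI impI)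
  show "a # q \<noteq> []" by simp
  fix i assume i: "Suc i < length (a # q)"
  show "adj ((a # q) ! i) ((a # q) ! Suc i)"
  proof (cases i)
    case 0
    then show ?thesis using assms by (cases q) (auto simp: is_walk_def)
  next
    case (Suc j)
    then show ?thesis using assms i by (auto simp: is_walk_def)
  qed
qed

lemma gdist_char:
  assumes D0: "\<And>x. D x x = 0"
  and Dtri: "\<And>x y z. adj x y \<Longrightarrow> z \<in> W \<Longrightarrow> D x z \<le> D y z + 1"
  and Dstep: "\<And>x z. x \<in> W \<Longrightarrow> z \<in> W \<Longrightarrow> x \<noteq> z \<Longrightarrow> \<exists>y. adj x y \<and> y \<in> W \<and> D x z = Suc (D y z)"
  and xW: "x \<in> W" and zW: "z \<in> W"
  shows "gdist adj x z = D x z"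
proof -
  have ex: "\<forall>x\<in>W. D x z = n \<longrightarrow> (\<exists>p. is_walk adj p \<and> length p = Suc n \<and> hd p = x \<and> last p = z)" for n
  proof (induction n)
    case 0
    show ?case
    proof (intro ballI impI)
      fix x assume x: "x \<in> W" "D x z = 0"
      have "x = z"
      proof (rule ccontr)
        assume "x \<noteq> z"
        then obtain y where "D x z = Suc (D y z)" using Dstep x zW by blast
        with x show False by simp
      qed
      thus "\<exists>p. is_walk adj p \<and> length p = Suc 0 \<and> hd p = x \<and> last p = z"
        by (intro exI[of _ "[x]"]) (simp add: is_walk_def)
    qed
  next
    case (Suc n)
    show ?case
    proof (intro ballI impI)
      fix x assume x: "x \<in> W" "D x z = Suc n"
      have "x \<noteq> z" using x D0 by auto
      then obtain y where y: "adj x y" "y \<in> W" "D x z = Suc (D y z)" using Dstep x zW by blast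
      then obtain p where p: "is_walk adj p" "length p = Suc n" "hd p = y" "last p = z"
        using Suc x by auto
      have "p \<noteq> []" using p by auto
      have "is_walk adj (x # p)" using walk_cons[OF p(1)] p y by simp
      thus "\<exists>p. is_walk adj p \<and> length p = Suc (Suc n) \<and> hd p = x \<and> last p = z"
        using p \<open>p \<noteq> []\<close> by (intro exI[of _ "x # p"]) simp
    qed
  qed
  have lb: "\<forall>x. is_walk adj p \<longrightarrow> hd p = x \<longrightarrow> last p = z \<longrightarrow> D x z \<le> length p - 1" for p
  proof (induction p)
    case Nil
    then show ?case by (simp add: is_walk_def)
  next
    case (Cons a q)
    show ?case
    proof (intro allI impI)
      fix x assume h: "is_walk adj (a # q)" "hd (a # q) = x" "last (a # q) = z"
      show "D x z \<le> length (a # q) - 1"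
      proof (cases "q = []")
        case True
        then show ?thesis using h D0 by simp
      next
        case False
        from walk_tail[OF h(1) False] have w: "is_walk adj q" "adj a (hd q)" by auto
        have "D (hd q) z \<le> length q - 1" using Cons.IH w h False by simp
        moreover have "D a z \<le> D (hd q) z + 1" using Dtri[OF w(2) zW] .
        ultimately show ?thesis using h False by (cases q) auto
      qed
    qed
  qed
  show ?thesis unfolding gdist_def
  proof (rule Least_equality)
    show "\<exists>p. is_walk adj p \<and> length p = Suc (D x z) \<and> hd p = x \<and> last p = z"
      using ex xW by blast
  next
    fix k assume "\<exists>p. is_walk adj p \<and> length p = Suc k \<and> hd p = x \<and> last p = z"
    then obtain p where "is_walk adj p" "length p = Suc k" "hd p = x" "last p = z" by blast
    thus "D x z \<le> k" using lb by fastforce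
  qed
qed

definition sd :: "nat set \<Rightarrow> nat set \<Rightarrow> nat" where
  "sd S T = card ((S - T) \<union> (T - S))"

lemma hyper_gdist:
  assumes "S \<in> hypercube_V n" "T \<in> hypercube_V n"
  shows "gdist (hypercube_adj n) S T = sd S T"
proof (rule gdist_char[where W = "hypercube_V n"])
  show "sd x x = 0" for x by (simp add: sd_def)
next
  fix x y z assume a: "hypercube_adj n x y" "z \<in> hypercube_V n"
  hence fin: "finite x" "finite y" "finite z"
    by (auto simp: hypercube_adj_def hypercube_V_def intro: finite_subset)
  have "(x - z) \<union> (z - x) \<subseteq> ((x - y) \<union> (y - x)) \<union> ((y - z) \<union> (z - y))" by blast
  hence "sd x z \<le> card (((x - y) \<union> (y - x)) \<union> ((y - z) \<union> (z - y)))"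
    unfolding sd_def using fin by (intro card_mono) auto
  also have "\<dots> \<le> card ((x - y) \<union> (y - x)) + card ((y - z) \<union> (z - y))" by (rule card_Un_le)
  finally show "sd x z \<le> sd y z + 1" using a by (simp add: sd_def hypercube_adj_def)
next
  fix x z assume a: "x \<in> hypercube_V n" "z \<in> hypercube_V n" "x \<noteq> z"
  hence fin: "finite x" "finite z"
    by (auto simp: hypercube_V_def intro: finite_subset)
  obtain e where e: "e \<in> (x - z) \<union> (z - x)" using a by blast
  define y where "y = (if e \<in> x then x - {e} else insert e x)"
  have yV: "y \<in> hypercube_V n" using a e by (auto simp: y_def hypercube_V_def)
  have "(x - y) \<union> (y - x) = {e}" by (auto simp: y_def)
  hence adj: "hypercube_adj n x y" using a yV by (simp add: hypercube_adj_def)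
  have eq: "(x - z) \<union> (z - x) = insert e ((y - z) \<union> (z - y))" using e by (auto simp: y_def)
  have ne: "e \<notin> (y - z) \<union> (z - y)" using e by (auto simp: y_def)
  have "finite ((y - z) \<union> (z - y))" using fin by (auto simp: y_def)
  hence "sd x z = Suc (sd y z)" unfolding sd_def eq using ne by simp
  thus "\<exists>y. hypercube_adj n x y \<and> y \<in> hypercube_V n \<and> sd x z = Suc (sd y z)" using adj yV by blast
qed (use assms in auto)

definition emb :: "nat \<Rightarrow> nat set" where
  "emb v = (if v = 3 then {} else if v = 2 then {0} else if v = 7 then {1} else if v = 1 then {0,1}
            else if v = 4 then {2} else if v = 6 then {3} else {2,3})"

definition d8 :: "nat \<Rightarrow> nat \<Rightarrow> nat" where
  "d8 x y = sd (emb x) (emb y)"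

lemma d8_tab[simp]: shows
  "d8 1 1 = 0"
  "d8 1 2 = 1"
  "d8 1 3 = 2"
  "d8 1 4 = 3"
  "d8 1 5 = 4"
  "d8 1 6 = 3"
  "d8 1 7 = 1"
  "d8 2 1 = 1"
  "d8 2 2 = 0"
  "d8 2 3 = 1"
  "d8 2 4 = 2"
  "d8 2 5 = 3"
  "d8 2 6 = 2"
  "d8 2 7 = 2"
  "d8 3 1 = 2"
  "d8 3 2 = 1"
  "d8 3 3 = 0"
  "d8 3 4 = 1"
  "d8 3 5 = 2"
  "d8 3 6 = 1"
  "d8 3 7 = 1"
  "d8 4 1 = 3"
  "d8 4 2 = 2"
  "d8 4 3 = 1"
  "d8 4 4 = 0"
  "d8 4 5 = 1"
  "d8 4 6 = 2"
  "d8 4 7 = 2"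
  "d8 5 1 = 4"
  "d8 5 2 = 3"
  "d8 5 3 = 2"
  "d8 5 4 = 1"
  "d8 5 5 = 0"
  "d8 5 6 = 1"
  "d8 5 7 = 3"
  "d8 6 1 = 3"
  "d8 6 2 = 2"
  "d8 6 3 = 1"
  "d8 6 4 = 2"
  "d8 6 5 = 1"
  "d8 6 6 = 0"
  "d8 6 7 = 2"
  "d8 7 1 = 1"
  "d8 7 2 = 2"
  "d8 7 3 = 1"
  "d8 7 4 = 2"
  "d8 7 5 = 3"
  "d8 7 6 = 2"
  "d8 7 7 = 0"
  by (simp_all add: d8_def sd_def emb_def)

lemma d8_tab1[simp]: shows
  "d8 (Suc 0) (Suc 0) = 0"
  "d8 (Suc 0) 2 = 1"
  "d8 (Suc 0) 3 = 2"
  "d8 (Suc 0) 4 = 3"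
  "d8 (Suc 0) 5 = 4"
  "d8 (Suc 0) 6 = 3"
  "d8 (Suc 0) 7 = 1"
  "d8 2 (Suc 0) = 1"
  "d8 3 (Suc 0) = 2"
  "d8 4 (Suc 0) = 3"
  "d8 5 (Suc 0) = 4"
  "d8 6 (Suc 0) = 3"
  "d8 7 (Suc 0) = 1"
  using d8_tab by simp_all

lemma G8_adj_iff: "G8_adj x y \<longleftrightarrow> (x,y) \<in> {(1,2),(2,3),(3,7),(7,1),(3,4),(4,5),(5,6),(6,3),(2,1),(3,2),(7,3),(1,7),(4,3),(5,4),(6,5),(3,6)}"
  unfolding G8_adj_def G8_E_def by auto

definition nh :: "nat \<Rightarrow> nat \<Rightarrow> nat" where
  "nh x z = (if x = 1 then (if z = 2 then 2 else if z = 3 then 2 else if z = 4 then 2 else if z = 5 then 2 else if z = 6 then 2 else 7) else if x = 2 then (if z = 1 then 1 else if z = 3 then 3 else if z = 4 then 3 else if z = 5 then 3 else if z = 6 then 3 else 1) else if x = 3 then (if z = 1 then 2 else if z = 2 then 2 else if z = 4 then 4 else if z = 5 then 4 else if z = 6 then 6 else 7) else if x = 4 then (if z = 1 then 3 else if z = 2 then 3 else if z = 3 then 3 else if z = 5 then 5 else if z = 6 then 3 else 3) else if x = 5 then (if z = 1 then 4 else if z = 2 then 4 else if z = 3 then 4 else if z = 4 then 4 else if z = 6 then 6 else 4) else if x = 6 then (if z = 1 then 3 else if z = 2 then 3 else if z = 3 then 3 else if z = 4 then 3 else if z = 5 then 5 else 3) else (if z = 1 then 1 else if z = 2 then 1 else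 if z = 3 then 3 else if z = 4 then 3 else if z = 5 then 3 else 3))"

lemma G8_step: assumes "x \<in> G8_V" "z \<in> G8_V" "x \<noteq> z"
  shows "G8_adj x (nh x z) \<and> nh x z \<in> G8_V \<and> d8 x z = Suc (d8 (nh x z) z)"
  using assms unfolding G8_V_def by (auto simp: nh_def G8_adj_iff)

lemma G8_gdist:
  assumes "x \<in> G8_V" "z \<in> G8_V"
  shows "gdist G8_adj x z = d8 x z"
proof (rule gdist_char[where W = G8_V])
  show "d8 x x = 0" for x by (simp add: d8_def sd_def)
next
  fix x y z assume "G8_adj x y" "z \<in> G8_V"
  thus "d8 x z \<le> d8 y z + 1"
    by (auto simp: G8_adj_iff G8_V_def)
next
  fix x z assume "x \<in> G8_V" "z \<in> G8_V" "x \<noteq> z"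
  thus "\<exists>y. G8_adj x y \<and> y \<in> G8_V \<and> d8 x z = Suc (d8 y z)"
    using G8_step by blast
qed (use assms in auto)

lemma G8_adj_num: "(a,b) \<in> {(1,2),(3,7),(2,3),(7,1),(3,4),(5,6),(4,5),(6,3)} \<Longrightarrow> G8_adj a b"
  by (auto simp: G8_adj_iff)

lemma theta8: "x \<in> G8_V \<Longrightarrow> y \<in> G8_V \<Longrightarrow> u \<in> G8_V \<Longrightarrow> v \<in> G8_V \<Longrightarrow>
  Theta G8_adj x y u v \<longleftrightarrow> d8 x u + d8 y v \<noteq> d8 x v + d8 y u"
  unfolding Theta_def by (simp add: G8_gdist)

lemma partial8: "partial_cube G8_V G8_adj"
  unfolding partial_cube_def
proof (intro conjI exI[of _ 4] exI[of _ emb])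
  show "is_graph G8_V G8_adj" unfolding is_graph_def G8_adj_iff G8_V_def by auto
  have sub: "emb u \<in> hypercube_V 4" if "u \<in> G8_V" for u
    using that by (auto simp: G8_V_def emb_def hypercube_V_def)
  have d0: "x = y" if "x \<in> G8_V" "y \<in> G8_V" "d8 x y = 0" for x y
    using that by (auto simp: G8_V_def)
  show "inj_on emb G8_V"
  proof (rule inj_onI)
    fix x y assume "x \<in> G8_V" "y \<in> G8_V" "emb x = emb y"
    thus "x = y" using d0[of x y] by (simp add: d8_def sd_def)
  qed
  show "emb ` G8_V \<subseteq> hypercube_V 4" using sub by auto
  have d1: "d8 x y = 1" if "G8_adj x y" for x y using that by (auto simp: G8_adj_iff)
  have aV: "x \<in> G8_V \<and> y \<in> G8_V" if "G8_adj x y" for x y using that by (auto simp: G8_adj_iff G8_V_def)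
  show "\<forall>x y. G8_adj x y \<longrightarrow> hypercube_adj 4 (emb x) (emb y)"
    using d1 aV sub by (auto simp: hypercube_adj_def d8_def sd_def)
  show "\<forall>u\<in>G8_V. \<forall>v\<in>G8_V. gdist G8_adj u v = gdist (hypercube_adj 4) (emb u) (emb v)"
    using sub by (simp add: G8_gdist hyper_gdist d8_def)
qed

lemma sq: fixes a b c d :: int assumes "\<bar>a - b\<bar> = \<bar>c - d\<bar>" "\<bar>b - c\<bar> = \<bar>d - a\<bar>" "\<bar>a - b\<bar> \<noteq> \<bar>b - c\<bar>" "a \<noteq> b"
  shows "a + c = b + d" using assms by (auto simp: abs_if split: if_splits)
lemma pig: fixes p q r s :: int
  assumes "p \<in> {1,2,3}" "q \<in> {1,2,3}" "r \<in> {1,2,3}" "s \<in> {1,2,3}"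
    "p \<noteq> q" "p \<noteq> r" "p \<noteq> s" "q \<noteq> r" "q \<noteq> s" "r \<noteq> s"
  shows False using assms by auto

lemma two: fixes c x2 x7 x4 x6 :: int
  assumes "x2 = c - 1 \<or> x7 = c - 1 \<or> x4 = c - 1 \<or> x6 = c - 1"
    "x2 = c + 1 \<or> x7 = c + 1 \<or> x4 = c + 1 \<or> x6 = c + 1"
    "\<bar>x2-c\<bar> \<noteq> \<bar>x7-c\<bar>" "\<bar>x2-c\<bar> \<noteq> \<bar>x4-c\<bar>" "\<bar>x2-c\<bar> \<noteq> \<bar>x6-c\<bar>"
    "\<bar>x7-c\<bar> \<noteq> \<bar>x4-c\<bar>" "\<bar>x7-c\<bar> \<noteq> \<bar>x6-c\<bar>" "\<bar>x4-c\<bar> \<noteq> \<bar>x6-c\<bar>"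
  shows False using assms by auto

lemma fin: fixes a1 a2 a3 a4 a5 a6 a7 :: int
  assumes E: "\<bar>a1 - a2\<bar> = \<bar>a3 - a7\<bar>" "\<bar>a2 - a3\<bar> = \<bar>a7 - a1\<bar>"
  "\<bar>a3 - a4\<bar> = \<bar>a5 - a6\<bar>" "\<bar>a4 - a5\<bar> = \<bar>a6 - a3\<bar>"
  "\<bar>a1 - a2\<bar> \<noteq> \<bar>a2 - a3\<bar>" "\<bar>a1 - a2\<bar> \<noteq> \<bar>a3 - a4\<bar>" "\<bar>a1 - a2\<bar> \<noteq> \<bar>a4 - a5\<bar>"
  "\<bar>a2 - a3\<bar> \<noteq> \<bar>a3 - a4\<bar>" "\<bar>a2 - a3\<bar> \<noteq> \<bar>a4 - a5\<bar>" "\<bar>a3 - a4\<bar> \<noteq> \<bar>a4 - a5\<bar>"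
  and B: "0 \<le> a1" "a1 < 7" "0 \<le> a2" "a2 < 7" "0 \<le> a3" "a3 < 7" "0 \<le> a4" "a4 < 7" "0 \<le> a5" "a5 < 7" "0 \<le> a6" "a6 < 7" "0 \<le> a7" "a7 < 7"
  and I: "a1 \<noteq> a2" "a1 \<noteq> a3" "a1 \<noteq> a4" "a1 \<noteq> a5" "a1 \<noteq> a6" "a1 \<noteq> a7"
    "a2 \<noteq> a3" "a2 \<noteq> a4" "a2 \<noteq> a5" "a2 \<noteq> a6" "a2 \<noteq> a7"
    "a3 \<noteq> a4" "a3 \<noteq> a5" "a3 \<noteq> a6" "a3 \<noteq> a7"
    "a4 \<noteq> a5" "a4 \<noteq> a6" "a4 \<noteq> a7"
    "a5 \<noteq> a6" "a5 \<noteq> a7" "a6 \<noteq> a7"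
  and L: "a1+a3=a2+a7" "a3+a5=a4+a6" "a1+a2+a3+a4+a5+a6+a7=21"
  and S: "a1=0 \<or> a2=0 \<or> a3=0 \<or> a4=0 \<or> a5=0 \<or> a6=0 \<or> a7=0"
  "a1=2 \<or> a2=2 \<or> a3=2 \<or> a4=2 \<or> a5=2 \<or> a6=2 \<or> a7=2"
  "a1=4 \<or> a2=4 \<or> a3=4 \<or> a4=4 \<or> a5=4 \<or> a6=4 \<or> a7=4"
  "a1=6 \<or> a2=6 \<or> a3=6 \<or> a4=6 \<or> a5=6 \<or> a6=6 \<or> a7=6"
  shows False
proof -
  have D: "\<bar>a2-a3\<bar> \<noteq> \<bar>a7-a3\<bar>" "\<bar>a2-a3\<bar> \<noteq> \<bar>a4-a3\<bar>" "\<bar>a2-a3\<bar> \<noteq> \<bar>a6-a3\<bar>"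
    "\<bar>a7-a3\<bar> \<noteq> \<bar>a4-a3\<bar>" "\<bar>a7-a3\<bar> \<noteq> \<bar>a6-a3\<bar>" "\<bar>a4-a3\<bar> \<noteq> \<bar>a6-a3\<bar>"
    subgoal using E(1) E(5) by (metis abs_minus_commute)
    subgoal using E(8) by (metis abs_minus_commute)
    subgoal using E(4) E(9) by (metis abs_minus_commute)
    subgoal using E(1) E(6) by (metis abs_minus_commute)
    subgoal using E(1) E(4) E(7) by (metis abs_minus_commute)
    subgoal using E(4) E(10) by (metis abs_minus_commute)
    done
  have h: "2 * (a2 + a7 + a4 + a6) = 21 + a3" using L(1) L(2) L(3) by (simp add: algebra_simps)
  have "a3 = 1 \<or> a3 = 3 \<or> a3 = 5" using h B(5) B(6) by presburger
  moreover have False if "a3 = 3"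
  proof -
    have "\<bar>a2 - a3\<bar> \<in> {1,2,3}" using B(3,4) I(7) that by auto
    moreover have "\<bar>a7 - a3\<bar> \<in> {1,2,3}" using B(13,14) I(15) that by auto
    moreover have "\<bar>a4 - a3\<bar> \<in> {1,2,3}" using B(7,8) I(12) that by auto
    moreover have "\<bar>a6 - a3\<bar> \<in> {1,2,3}" using B(11,12) I(14) that by auto
    ultimately show False using D pig by blast
  qed
  moreover have False if "a3 = 1"
  proof -
    have "a1 + a5 = 9" using L h that by linarith
    hence "a1 \<noteq> 0 \<and> a5 \<noteq> 0 \<and> a1 \<noteq> 2 \<and> a5 \<noteq> 2" using B by auto
    hence "a2 = a3 - 1 \<or> a7 = a3 - 1 \<or> a4 = a3 - 1 \<or> a6 = a3 - 1"
      "a2 = a3 + 1 \<or> a7 = a3 + 1 \<or> a4 = a3 + 1 \<or> a6 = a3 + 1"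
      using S(1) S(2) that by auto
    thus False using two D by blast
  qed
  moreover have False if "a3 = 5"
  proof -
    have "a1 + a5 = 3" using L h that by linarith
    hence "a1 \<noteq> 4 \<and> a5 \<noteq> 4 \<and> a1 \<noteq> 6 \<and> a5 \<noteq> 6" using B by auto
    hence "a2 = a3 - 1 \<or> a7 = a3 - 1 \<or> a4 = a3 - 1 \<or> a6 = a3 - 1"
      "a2 = a3 + 1 \<or> a7 = a3 + 1 \<or> a4 = a3 + 1 \<or> a6 = a3 + 1"
      using S(3) S(4) that by auto
    thus False using two D by blast
  qed
  ultimately show False by blast
qed

theorem theorem2:
  shows "partial_cube G8_V G8_adj \<and> \<not> (\<exists>f. theta_graceful_labeling G8_V G8_adj f)"
proof (intro conjI notI)
  show "partial_cube G8_V G8_adj" by (rule partial8)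
next
  assume "\<exists>f. theta_graceful_labeling G8_V G8_adj f"
  then obtain f where bij: "bij_betw f G8_V {..<card G8_V}"
    and th: "\<And>x y u v. G8_adj x y \<Longrightarrow> G8_adj u v \<Longrightarrow>
        (Theta G8_adj x y u v \<longleftrightarrow> \<bar>int (f x) - int (f y)\<bar> = \<bar>int (f u) - int (f v)\<bar>)"
    unfolding theta_graceful_labeling_def by blast
  have c: "card G8_V = 7" by (simp add: G8_V_def)
  have rng: "f i < 7" if "i \<in> G8_V" for i using bij that c by (auto simp: bij_betw_def)
  have inj: "f i \<noteq> f j" if "i \<in> G8_V" "j \<in> G8_V" "i \<noteq> j" for i j
    using bij that by (auto simp: bij_betw_def inj_on_def)
  have V: "1 \<in> G8_V" "2 \<in> G8_V" "3 \<in> G8_V" "4 \<in> G8_V" "5 \<in> G8_V" "6 \<in> G8_V" "7 \<in> G8_V"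
    by (simp_all add: G8_V_def)
  have A: "G8_adj 1 2" "G8_adj 3 7" "G8_adj 2 3" "G8_adj 7 1" "G8_adj 3 4" "G8_adj 5 6" "G8_adj 4 5" "G8_adj 6 3"
    by (simp_all add: G8_adj_iff)
  have t0: "Theta G8_adj 1 2 3 7" by (simp add: theta8 G8_V_def)
  have e0: "\<bar>int (f 1) - int (f 2)\<bar> = \<bar>int (f 3) - int (f 7)\<bar>"
    using th[OF G8_adj_num[of 1 2] G8_adj_num[of 3 7]] t0 by blast
  have t1: "Theta G8_adj 2 3 7 1" by (simp add: theta8 G8_V_def)
  have e1: "\<bar>int (f 2) - int (f 3)\<bar> = \<bar>int (f 7) - int (f 1)\<bar>"
    using th[OF G8_adj_num[of 2 3] G8_adj_num[of 7 1]] t1 by blast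
  have t2: "Theta G8_adj 3 4 5 6" by (simp add: theta8 G8_V_def)
  have e2: "\<bar>int (f 3) - int (f 4)\<bar> = \<bar>int (f 5) - int (f 6)\<bar>"
    using th[OF G8_adj_num[of 3 4] G8_adj_num[of 5 6]] t2 by blast
  have t3: "Theta G8_adj 4 5 6 3" by (simp add: theta8 G8_V_def)
  have e3: "\<bar>int (f 4) - int (f 5)\<bar> = \<bar>int (f 6) - int (f 3)\<bar>"
    using th[OF G8_adj_num[of 4 5] G8_adj_num[of 6 3]] t3 by blast
  have t4: "\<not> Theta G8_adj 1 2 2 3" by (simp add: theta8 G8_V_def)
  have e4: "\<bar>int (f 1) - int (f 2)\<bar> \<noteq> \<bar>int (f 2) - int (f 3)\<bar>"
    using th[OF G8_adj_num[of 1 2] G8_adj_num[of 2 3]] t4 by blast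
  have t5: "\<not> Theta G8_adj 1 2 3 4" by (simp add: theta8 G8_V_def)
  have e5: "\<bar>int (f 1) - int (f 2)\<bar> \<noteq> \<bar>int (f 3) - int (f 4)\<bar>"
    using th[OF G8_adj_num[of 1 2] G8_adj_num[of 3 4]] t5 by blast
  have t6: "\<not> Theta G8_adj 1 2 4 5" by (simp add: theta8 G8_V_def)
  have e6: "\<bar>int (f 1) - int (f 2)\<bar> \<noteq> \<bar>int (f 4) - int (f 5)\<bar>"
    using th[OF G8_adj_num[of 1 2] G8_adj_num[of 4 5]] t6 by blast
  have t7: "\<not> Theta G8_adj 2 3 3 4" by (simp add: theta8 G8_V_def)
  have e7: "\<bar>int (f 2) - int (f 3)\<bar> \<noteq> \<bar>int (f 3) - int (f 4)\<bar>"
    using th[OF G8_adj_num[of 2 3] G8_adj_num[of 3 4]] t7 by blast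
  have t8: "\<not> Theta G8_adj 2 3 4 5" by (simp add: theta8 G8_V_def)
  have e8: "\<bar>int (f 2) - int (f 3)\<bar> \<noteq> \<bar>int (f 4) - int (f 5)\<bar>"
    using th[OF G8_adj_num[of 2 3] G8_adj_num[of 4 5]] t8 by blast
  have t9: "\<not> Theta G8_adj 3 4 4 5" by (simp add: theta8 G8_V_def)
  have e9: "\<bar>int (f 3) - int (f 4)\<bar> \<noteq> \<bar>int (f 4) - int (f 5)\<bar>"
    using th[OF G8_adj_num[of 3 4] G8_adj_num[of 4 5]] t9 by blast
  have R: "f 1 < 7" "f 2 < 7" "f 3 < 7" "f 4 < 7" "f 5 < 7" "f 6 < 7" "f 7 < 7"
    using V by (simp_all add: rng)
  have I: "f 1 \<noteq> f 2" "f 1 \<noteq> f 3" "f 1 \<noteq> f 4" "f 1 \<noteq> f 5" "f 1 \<noteq> f 6" "f 1 \<noteq> f 7"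
    "f 2 \<noteq> f 3" "f 2 \<noteq> f 4" "f 2 \<noteq> f 5" "f 2 \<noteq> f 6" "f 2 \<noteq> f 7"
    "f 3 \<noteq> f 4" "f 3 \<noteq> f 5" "f 3 \<noteq> f 6" "f 3 \<noteq> f 7"
    "f 4 \<noteq> f 5" "f 4 \<noteq> f 6" "f 4 \<noteq> f 7"
    "f 5 \<noteq> f 6" "f 5 \<noteq> f 7" "f 6 \<noteq> f 7"
    using V by (simp_all add: inj)
  have sum7: "sum f G8_V = 21"
  proof -
    have "sum f G8_V = sum (\<lambda>x. x) {..<card G8_V}"
      using sum.reindex_bij_betw[OF bij, of "\<lambda>x. x"] by simp
    also have "\<dots> = 21" unfolding c by (simp add: numeral_eq_Suc)
    finally show ?thesis .
  qed
  hence sumL: "int (f 1) + int (f 2) + int (f 3) + int (f 4) + int (f 5) + int (f 6) + int (f 7) = 21"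
    by (simp add: G8_V_def)
  have surj: "\<exists>i\<in>G8_V. f i = k" if "k < 7" for k
    using bij that c unfolding bij_betw_def by (metis imageE lessThan_iff)
  have S: "f 1 = k \<or> f 2 = k \<or> f 3 = k \<or> f 4 = k \<or> f 5 = k \<or> f 6 = k \<or> f 7 = k"
    if "k < 7" for k
    using surj[OF that] unfolding G8_V_def by auto
  have Bi: "0 \<le> int (f 1)" "int (f 1) < 7" "0 \<le> int (f 2)" "int (f 2) < 7" "0 \<le> int (f 3)" "int (f 3) < 7" "0 \<le> int (f 4)" "int (f 4) < 7" "0 \<le> int (f 5)" "int (f 5) < 7" "0 \<le> int (f 6)" "int (f 6) < 7" "0 \<le> int (f 7)" "int (f 7) < 7" using R by simp_all
  have Ii: "int (f 1) \<noteq> int (f 2)" "int (f 1) \<noteq> int (f 3)" "int (f 1) \<noteq> int (f 4)" "int (f 1) \<noteq> int (f 5)" "int (f 1) \<noteq> int (f 6)" "int (f 1) \<noteq> int (f 7)" "int (f 2) \<noteq> int (f 3)" "int (f 2) \<noteq> int (f 4)" "int (f 2) \<noteq> int (f 5)" "int (f 2) \<noteq> int (f 6)" "int (f 2) \<noteq> int (f 7)" "int (f 3) \<noteq> int (f 4)" "int (f 3) \<noteq> int (f 5)" "int (f 3) \<noteq> int (f 6)" "int (f 3) \<noteq> int (f 7)" "int (f 4) \<noteq> int (f 5)" "int (f 4) \<noteq> int (f 6)" "int (f 4) \<noteq> int (f 7)" "int (f 5) \<noteq> int (f 6)" "int (f 5) \<noteq> int (f 7)" "int (f 6) \<noteq>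 int (f 7)" using I by simp_all
  have Si: "int (f 1) = 0 \<or> int (f 2) = 0 \<or> int (f 3) = 0 \<or> int (f 4) = 0 \<or> int (f 5) = 0 \<or> int (f 6) = 0 \<or> int (f 7) = 0" "int (f 1) = 2 \<or> int (f 2) = 2 \<or> int (f 3) = 2 \<or> int (f 4) = 2 \<or> int (f 5) = 2 \<or> int (f 6) = 2 \<or> int (f 7) = 2" "int (f 1) = 4 \<or> int (f 2) = 4 \<or> int (f 3) = 4 \<or> int (f 4) = 4 \<or> int (f 5) = 4 \<or> int (f 6) = 4 \<or> int (f 7) = 4" "int (f 1) = 6 \<or> int (f 2) = 6 \<or> int (f 3) = 6 \<or> int (f 4) = 6 \<or> int (f 5) = 6 \<or> int (f 6) = 6 \<or> int (f 7) = 6"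
    using S[of 0] S[of 2] S[of 4] S[of 6] by auto
  have L1: "int (f 1) + int (f 3) = int (f 2) + int (f 7)"
    by (rule sq[OF e0 e1 e4 Ii(1)])
  have L2: "int (f 3) + int (f 5) = int (f 4) + int (f 6)"
    by (rule sq[OF e2 e3 e9 Ii(12)])
  show False by (rule fin[OF e0 e1 e2 e3 e4 e5 e6 e7 e8 e9 Bi Ii L1 L2 sumL Si])
qed

end
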